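(* Let $\Gamma$ be a coloring and $\Omega$ a $k$-ordering of $T_{d,k}$, with root $\mathcal T$. (1) For every $g\in G_{d,k}$, the unique reduced word representing $g$ has length $m$ if and only if $\mathrm{dist}(g.\mathcal T,\mathcal T)=m$, where $\mathrm{dist}$ is the graph distance in the line graph of $T_{d,k}$. (2) The left action of $G_{d,k}$ on the $d$-cells of $T_{d,k}$ is simply transitive.
   Context: Fix $d,k\ge1$, $[\![d]\!]=\{0,\dots,d\}$. $G_{d,k}=\langle\alpha_0,\dots,\alpha_d\mid\alpha_i^k=e\rangle$ is the free product of $d+1$ cyclic groups of order $k$; a word $\alpha_{j_m}^{l_m}\cdots\alpha_{j_1}^{l_1}$ is reduced if all $l_r\in\{1,\dots,k-1\}$ and $j_r\ne j_{r+1}$; each element has a unique reduced word, of length $m$. The arboreal complex $T_{d,k}$: start from a single $d$-simplex $\mathcal T$, attach to each of its $(d-1)$-faces $k-1$ new $d$-simplices each using a new vertex, and inductively attach to each $(d-1)$-face created in the previous step $k-1$ new $d$-simplices each using a new vertex; $T_{d,k}$ is the union. Every $(d-1)$-cell lies in exactly $k$ $d$-cells. The line graph of $T_{d,k}$ has the $d$-cells as vertices, two being adjacent iff they share a $(d-1)$-cell. A coloring $\Gamma$ is a map from vertices to $[\![d]\!]$ injective on each $d$-cell, extended to cells by $\Gamma(\sigma)=\{\Gamma(v):v\in\sigma\}$. A $k$-ordering $\Omega$ assigns to each $(d-1)$-cell $\sigma$ a homomorphism $\Omega_\sigma:\mathbb Z/k\mathbb Z\to\mathrm{Sym}(\delta(\sigma))$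 with transitive image, $\delta(\sigma)$ being the set of $d$-cells containing $\sigma$. The left action of $G_{d,k}$ on $d$-cells: for a $d$-cell $\tau$, $i\in[\![d]\!]$, $l\in\mathbb Z$, put $\alpha_i^l.\tau=\Omega_\sigma(l).\tau$ where $\sigma$ is the unique $(d-1)$-face of $\tau$ of color $[\![d]\!]\setminus\{i\}$, and extend to words letter by letter (right-most letter first); this is a well-defined action. *)

theory Defs
  imports Main "HOL-Library.FSet" "HOL-Algebra.Elementary_Groups" "HOL-Algebra.Bij"
begin

text \<open>Vertices: the d+1 vertices of the root simplex are Root 0, ..., Root d; a vertex
  created when attaching a new d-simplex to the (d-1)-face sigma, as the j-th of the
  k-1 new simplices (j = 1..k-1), is New sigma j.\<close>

datatype vtx = Root nat | New "vtx fset" nat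

definition root :: "nat \<Rightarrow> vtx set" where
  "root d = Root ` {0..d}"

text \<open>new_faces d k n: the (d-1)-faces created in step n (step 0 = the root simplex).\<close>
primrec new_faces :: "nat \<Rightarrow> nat \<Rightarrow> nat \<Rightarrow> vtx set set" where
  "new_faces d k 0 = {root d - {Root i} | i. i \<le> d}"
| "new_faces d k (Suc n) =
     {insert (New (Abs_fset \<sigma>) j) (\<sigma> - {w}) | \<sigma> j w.
        \<sigma> \<in> new_faces d k n \<and> j \<in> {1..<k} \<and> w \<in> \<sigma>}"

text \<open>The d-simplices attached in step n+1.\<close>
definition new_cells :: "nat \<Rightarrow> nat \<Rightarrow> nat \<Rightarrow> vtx set set" where
  "new_cells d k n = {insert (New (Abs_fset \<sigma>) j) \<sigma> | \<sigma> j. \<sigma> \<in> new_faces d k n \<and> j \<in> {1..<k}}"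

definition cells :: "nat \<Rightarrow> nat \<Rightarrow> vtx set set" where
  "cells d k = insert (root d) (\<Union>n. new_cells d k n)"

definition faces :: "nat \<Rightarrow> nat \<Rightarrow> vtx set set" where
  "faces d k = {\<tau> - {v} | \<tau> v. \<tau> \<in> cells d k \<and> v \<in> \<tau>}"

definition verts :: "nat \<Rightarrow> nat \<Rightarrow> vtx set" where
  "verts d k = \<Union>(cells d k)"

definition delta :: "nat \<Rightarrow> nat \<Rightarrow> vtx set \<Rightarrow> vtx set set" where
  "delta d k \<sigma> = {\<tau> \<in> cells d k. \<sigma> \<subseteq> \<tau>}"

definition line_adj :: "nat \<Rightarrow> nat \<Rightarrow> vtx set \<Rightarrow> vtx set \<Rightarrow> bool" where
  "line_adj d k \<tau> \<tau>' \<longleftrightarrow> \<tau> \<in> cells d k \<and> \<tau>' \<in> cells d k \<and> \<tau> \<noteq> \<tau>' \<and>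
     (\<exists>\<sigma>\<in>faces d k. \<sigma> \<subseteq> \<tau> \<and> \<sigma> \<subseteq> \<tau>')"

definition line_walk :: "nat \<Rightarrow> nat \<Rightarrow> vtx set list \<Rightarrow> bool" where
  "line_walk d k p \<longleftrightarrow> p \<noteq> [] \<and> set p \<subseteq> cells d k \<and>
     (\<forall>i. Suc i < length p \<longrightarrow> line_adj d k (p ! i) (p ! Suc i))"

definition line_dist :: "nat \<Rightarrow> nat \<Rightarrow> vtx set \<Rightarrow> vtx set \<Rightarrow> nat" where
  "line_dist d k \<tau> \<tau>' =
     (LEAST m. \<exists>p. line_walk d k p \<and> hd p = \<tau> \<and> last p = \<tau>' \<and> length p = Suc m)"

definition coloring :: "nat \<Rightarrow> nat \<Rightarrow> (vtx \<Rightarrow> nat) \<Rightarrow> bool" where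
  "coloring d k \<Gamma> \<longleftrightarrow> (\<forall>v\<in>verts d k. \<Gamma> v \<le> d) \<and> (\<forall>\<tau>\<in>cells d k. inj_on \<Gamma> \<tau>)"

text \<open>Z/kZ is integer_mod_group k (carrier {0..<k}); Sym(delta sigma) is BijGroup (delta sigma).\<close>
definition k_ordering :: "nat \<Rightarrow> nat \<Rightarrow> (vtx set \<Rightarrow> int \<Rightarrow> vtx set \<Rightarrow> vtx set) \<Rightarrow> bool" where
  "k_ordering d k \<Omega> \<longleftrightarrow> (\<forall>\<sigma>\<in>faces d k.
     \<Omega> \<sigma> \<in> hom (integer_mod_group k) (BijGroup (delta d k \<sigma>)) \<and>
     (\<forall>\<tau>\<in>delta d k \<sigma>. \<forall>\<tau>'\<in>delta d k \<sigma>.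
        \<exists>l\<in>carrier (integer_mod_group k). \<Omega> \<sigma> l \<tau> = \<tau>'))"

text \<open>A word alpha_{j_m}^{l_m} ... alpha_{j_1}^{l_1} is stored as the list
  [(j_1,l_1), ..., (j_m,l_m)] (right-most letter first).
  Elements of G_{d,k} correspond bijectively to reduced words.\<close>
definition reduced :: "nat \<Rightarrow> nat \<Rightarrow> (nat \<times> int) list \<Rightarrow> bool" where
  "reduced d k w \<longleftrightarrow> (\<forall>(j, l)\<in>set w. j \<le> d \<and> 1 \<le> l \<and> l < int k) \<and>
     (\<forall>r. Suc r < length w \<longrightarrow> fst (w ! r) \<noteq> fst (w ! Suc r))"

text \<open>alpha_i^l . tau = Omega_sigma(l) . tau, sigma the face of tau of colour [d] - {i}.\<close>
definition letter_act ::
  "nat \<Rightarrow> (vtx \<Rightarrow> nat) \<Rightarrow> (vtx set \<Rightarrow> int \<Rightarrow> vtx set \<Rightarrow> vtx set) \<Rightarrow> nat \<Rightarrow> int \<Rightarrow> vtx set \<Rightarrow> vtx set" where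
  "letter_act k \<Gamma> \<Omega> i l \<tau> = \<Omega> {v \<in> \<tau>. \<Gamma> v \<noteq> i} (l mod int k) \<tau>"

definition word_act ::
  "nat \<Rightarrow> (vtx \<Rightarrow> nat) \<Rightarrow> (vtx set \<Rightarrow> int \<Rightarrow> vtx set \<Rightarrow> vtx set) \<Rightarrow> (nat \<times> int) list \<Rightarrow> vtx set \<Rightarrow> vtx set" where
  "word_act k \<Gamma> \<Omega> w \<tau> = fold (\<lambda>(i, l) t. letter_act k \<Gamma> \<Omega> i l t) w \<tau>"

end

theory Submission
  imports Defs
begin

primrec lev :: "vtx \<Rightarrow> nat" where
  "lev (Root i) = 0"
| "lev (New s j) = Suc (Max (fset (fimage lev s)))"

lemma lev_New: "finite \<sigma> \<Longrightarrow> lev (New (Abs_fset \<sigma>) j) = Suc (Max (lev ` \<sigma>))"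
  by (simp add: Abs_fset_inverse)

lemma root_props: fixes d :: nat shows "finite (root d)" "card (root d) = Suc d" "u \<in> root d \<Longrightarrow> lev u = 0"
  unfolding root_def by (auto simp: card_image inj_on_def)

lemma NF_inv:
  assumes d: "1 \<le> d" and "\<sigma> \<in> new_faces d k n"
  shows "finite \<sigma> \<and> card \<sigma> = d \<and> (\<forall>u\<in>\<sigma>. lev u \<le> n) \<and> (\<exists>u\<in>\<sigma>. lev u = n)"
  using assms(2)
proof (induction n arbitrary: \<sigma>)
  case 0
  then obtain i where i: "i \<le> d" "\<sigma> = root d - {Root i}" by auto
  have "Root (if i = 0 then 1 else 0) \<in> \<sigma>" using i d by (auto simp: root_def)
  moreover have "Root i \<in> root d" using i by (simp add: root_def)
  hence "card \<sigma> = d" using i root_props(2)[where d=d] by (simp add: card_Diff_singleton)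
  ultimately show ?case using i root_props[where d=d] by auto
next
  case (Suc n)
  then obtain \<rho> j w where r: "\<sigma> = insert (New (Abs_fset \<rho>) j) (\<rho> - {w})"
     "\<rho> \<in> new_faces d k n" "j \<in> {1..<k}" "w \<in> \<rho>" by auto
  from Suc.IH[OF r(2)] have fin: "finite \<rho>" "card \<rho> = d" "\<forall>u\<in>\<rho>. lev u \<le> n" "\<exists>u\<in>\<rho>. lev u = n"
    by auto
  have mx: "Max (lev ` \<rho>) = n" using fin by (intro Max_eqI) auto
  have lv: "lev (New (Abs_fset \<rho>) j) = Suc n" using lev_New[OF fin(1)] mx by simp
  hence nin: "New (Abs_fset \<rho>) j \<notin> \<rho>" using fin(3) by fastforce
  have "card (\<rho> - {w}) = d - 1" using fin r(4) by (simp add: card_Diff_singleton)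
  hence "card \<sigma> = d" using r(1) nin fin(1) d by (simp add: card_insert_if)
  then show ?case using r fin lv nin by auto
qed

lemma NF_Max: "1 \<le> d \<Longrightarrow> \<sigma> \<in> new_faces d k n \<Longrightarrow> Max (lev ` \<sigma>) = n"
  using NF_inv[of d \<sigma> k n] by (intro Max_eqI) auto

lemma NF_newlev: "1 \<le> d \<Longrightarrow> \<sigma> \<in> new_faces d k n \<Longrightarrow> lev (New (Abs_fset \<sigma>) j) = Suc n"
  using NF_inv[of d \<sigma> k n] NF_Max[of d \<sigma> k n] lev_New by simp

lemma NF_new_notin: "1 \<le> d \<Longrightarrow> \<sigma> \<in> new_faces d k n \<Longrightarrow> New (Abs_fset \<sigma>) j \<notin> \<sigma>"
  using NF_inv[of d \<sigma> k n] NF_newlev[of d \<sigma> k n j] by fastforce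

definition children :: "nat \<Rightarrow> vtx set \<Rightarrow> vtx set set" where
  "children k \<sigma> = (\<lambda>j. insert (New (Abs_fset \<sigma>) j) \<sigma>) ` {1..<k}"

lemma NC_iff: "\<tau> \<in> new_cells d k n \<longleftrightarrow> (\<exists>\<sigma>\<in>new_faces d k n. \<tau> \<in> children k \<sigma>)"
proof
  assume "\<tau> \<in> new_cells d k n"
  then obtain \<sigma> j where "\<tau> = insert (New (Abs_fset \<sigma>) j) \<sigma>" "\<sigma> \<in> new_faces d k n" "j \<in> {1..<k}"
    unfolding new_cells_def by blast
  thus "\<exists>\<sigma>\<in>new_faces d k n. \<tau> \<in> children k \<sigma>" unfolding children_def by blast
next
  assume "\<exists>\<sigma>\<in>new_faces d k n. \<tau> \<in> children k \<sigma>"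
  then obtain \<sigma> j where "\<sigma> \<in> new_faces d k n" "j \<in> {1..<k}" "\<tau> = insert (New (Abs_fset \<sigma>) j) \<sigma>"
    unfolding children_def by blast
  thus "\<tau> \<in> new_cells d k n" unfolding new_cells_def by blast
qed

lemma cells_iff: "\<tau> \<in> cells d k \<longleftrightarrow> \<tau> = root d \<or> (\<exists>n. \<exists>\<sigma>\<in>new_faces d k n. \<tau> \<in> children k \<sigma>)"
  unfolding cells_def using NC_iff by blast

lemma cells_nonroot:
  assumes "\<tau> \<in> cells d k" "\<tau> \<noteq> root d"
  obtains n \<sigma> where "\<sigma> \<in> new_faces d k n" "\<tau> \<in> children k \<sigma>"
  using assms unfolding cells_iff by blast

lemma children_props:
  assumes d: "1 \<le> d" and \<sigma>: "\<sigma> \<in> new_faces d k n" and \<tau>: "\<tau> \<in> children k \<sigma>"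
  shows "\<tau> \<in> cells d k" "\<sigma> \<subseteq> \<tau>" "Max (lev ` \<tau>) = Suc n" "finite \<tau>" "card \<tau> = Suc d"
proof -
  obtain j where j: "j \<in> {1..<k}" "\<tau> = insert (New (Abs_fset \<sigma>) j) \<sigma>" using \<tau> children_def by auto
  show "\<tau> \<in> cells d k" unfolding cells_iff using \<sigma> \<tau> by blast
  show "\<sigma> \<subseteq> \<tau>" using j by auto
  have inv: "finite \<sigma>" "card \<sigma> = d" "\<forall>u\<in>\<sigma>. lev u \<le> n" using NF_inv[OF d \<sigma>] by auto
  show "Max (lev ` \<tau>) = Suc n" using j inv NF_newlev[OF d \<sigma>, of j]
    by (intro Max_eqI) auto
  show "finite \<tau>" using j inv by auto
  show "card \<tau> = Suc d" using j inv NF_new_notin[OF d \<sigma>, of j] by simp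
qed

lemma root_Max: "Max (lev ` root d) = 0"
  using root_props[where d=d] by (intro Max_eqI) (auto simp: root_def intro!: image_eqI[where x="Root 0"])

lemma cell_props:
  assumes d: "1 \<le> d" and "\<tau> \<in> cells d k"
  shows "finite \<tau>" "card \<tau> = Suc d"
proof -
  have "finite \<tau> \<and> card \<tau> = Suc d"
  proof (cases "\<tau> = root d")
    case True thus ?thesis using root_props(1,2)[where d=d] by simp
  next
    case False
    then obtain n \<sigma> where "\<sigma> \<in> new_faces d k n" "\<tau> \<in> children k \<sigma>" using assms(2) cells_nonroot by blast
    thus ?thesis using children_props(4,5)[OF d] by blast
  qed
  thus "finite \<tau>" "card \<tau> = Suc d" by auto
qed

lemma card_children:
  assumes d: "1 \<le> d" and \<sigma>: "\<sigma> \<in> new_faces d k n"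
  shows "card (children k \<sigma>) = k - 1"
proof -
  have "inj_on (\<lambda>j. insert (New (Abs_fset \<sigma>) j) \<sigma>) {1..<k}"
  proof
    fix a b assume "a \<in> {1..<k}" "b \<in> {1..<k}" and eq: "insert (New (Abs_fset \<sigma>) a) \<sigma> = insert (New (Abs_fset \<sigma>) b) \<sigma>"
    have "New (Abs_fset \<sigma>) a \<notin> \<sigma>" using NF_new_notin[OF d \<sigma>] .
    hence "New (Abs_fset \<sigma>) a \<in> insert (New (Abs_fset \<sigma>) b) \<sigma> - \<sigma>" using eq by blast
    thus "a = b" by auto
  qed
  thus ?thesis unfolding children_def by (simp add: card_image)
qed

lemma children_unique:
  assumes d: "1 \<le> d" and s1: "\<sigma>1 \<in> new_faces d k n1" and s2: "\<sigma>2 \<in> new_faces d k n2"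
    and t1: "\<tau> \<in> children k \<sigma>1" and t2: "\<tau> \<in> children k \<sigma>2"
  shows "\<sigma>1 = \<sigma>2"
proof -
  obtain j1 where j1: "\<tau> = insert (New (Abs_fset \<sigma>1) j1) \<sigma>1" using t1 children_def by auto
  obtain j2 where j2: "\<tau> = insert (New (Abs_fset \<sigma>2) j2) \<sigma>2" using t2 children_def by auto
  have "Suc n1 = Suc n2" using children_props(3)[OF d s1 t1] children_props(3)[OF d s2 t2] by simp
  hence n: "n1 = n2" by simp
  have l1: "lev (New (Abs_fset \<sigma>1) j1) = Suc n1" using NF_newlev[OF d s1] .
  have l2: "lev (New (Abs_fset \<sigma>2) j2) = Suc n2" using NF_newlev[OF d s2] .
  have i1: "\<forall>u\<in>\<sigma>1. lev u \<le> n1" and i2: "\<forall>u\<in>\<sigma>2. lev u \<le> n2" using NF_inv[OF d s1] NF_inv[OF d s2] by auto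
  have veq: "New (Abs_fset \<sigma>1) j1 = New (Abs_fset \<sigma>2) j2"
  proof (rule ccontr)
    assume ne: "New (Abs_fset \<sigma>1) j1 \<noteq> New (Abs_fset \<sigma>2) j2"
    hence "New (Abs_fset \<sigma>1) j1 \<in> \<sigma>2" using j1 j2 by blast
    thus False using i2 l1 n by fastforce
  qed
  have "\<sigma>1 = \<tau> - {New (Abs_fset \<sigma>1) j1}" using j1 NF_new_notin[OF d s1] by auto
  also have "\<dots> = \<sigma>2" using j2 veq NF_new_notin[OF d s2] by auto
  finally show ?thesis .
qed

lemma cells_not_child_root: "root d \<notin> children k \<sigma>"
  unfolding children_def root_def by auto

lemma owner:
  assumes d: "1 \<le> d" and \<sigma>: "\<sigma> \<in> new_faces d k n"
  shows "\<exists>ow\<in>cells d k. \<sigma> \<subseteq> ow \<and> Max (lev ` ow) = n \<and> ow \<notin> children k \<sigma> \<and>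
           (\<forall>\<tau>\<in>cells d k. \<sigma> \<subseteq> \<tau> \<longrightarrow> \<tau> = ow \<or> \<tau> \<in> children k \<sigma>)"
proof (cases n)
  case 0
  then obtain i where i: "i \<le> d" "\<sigma> = root d - {Root i}" using \<sigma> by auto
  have sinv: "finite \<sigma>" "card \<sigma> = d" using NF_inv[OF d \<sigma>] by auto
  have "\<tau> = root d \<or> \<tau> \<in> children k \<sigma>" if tc: "\<tau> \<in> cells d k" "\<sigma> \<subseteq> \<tau>" for \<tau>
  proof -
    { assume "\<tau> \<noteq> root d"
      then obtain m \<rho> where \<rho>: "\<rho> \<in> new_faces d k m" "\<tau> \<in> children k \<rho>" using tc cells_nonroot by blast
      then obtain j where j: "\<tau> = insert (New (Abs_fset \<rho>) j) \<rho>" by (auto simp: children_def)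
      have "New (Abs_fset \<rho>) j \<notin> \<sigma>" using i by (auto simp: root_def)
      hence sub: "\<sigma> \<subseteq> \<rho>" using that(2) j by auto
      have "\<sigma> = \<rho>" using card_subset_eq[OF _ sub] NF_inv[OF d \<rho>(1)] sinv by auto
      hence "\<tau> \<in> children k \<sigma>" using \<rho> by simp }
    thus ?thesis by blast
  qed
  moreover have "root d \<in> cells d k" by (simp add: cells_def)
  ultimately show ?thesis using i 0 root_Max[of d] cells_not_child_root[of d k \<sigma>]
    by (intro bexI[of _ "root d"]) auto
next
  case (Suc m0)
  then obtain \<rho>0 j0 w where r: "\<sigma> = insert (New (Abs_fset \<rho>0) j0) (\<rho>0 - {w})"
     "\<rho>0 \<in> new_faces d k m0" "j0 \<in> {1..<k}" "w \<in> \<rho>0" using \<sigma> by auto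
  define v0 where "v0 = New (Abs_fset \<rho>0) j0"
  define ow where "ow = insert v0 \<rho>0"
  have och: "ow \<in> children k \<rho>0" unfolding children_def ow_def v0_def using r(3) by blast
  have sinv: "finite \<sigma>" "card \<sigma> = d" using NF_inv[OF d \<sigma>] by auto
  have lv0: "lev v0 = Suc m0" using NF_newlev[OF d r(2)] v0_def by simp
  have r0: "finite \<rho>0" "\<forall>u\<in>\<rho>0. lev u \<le> m0" using NF_inv[OF d r(2)] by auto
  have "\<tau> = ow \<or> \<tau> \<in> children k \<sigma>" if tc: "\<tau> \<in> cells d k" "\<sigma> \<subseteq> \<tau>" for \<tau>
  proof -
    have "v0 \<in> \<tau>" using that(2) r(1) v0_def by auto
    hence "\<tau> \<noteq> root d" using root_props(3)[where d=d and u=v0] lv0 by auto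
    then obtain m \<rho> where \<rho>: "\<rho> \<in> new_faces d k m" "\<tau> \<in> children k \<rho>" using tc cells_nonroot by blast
    then obtain j where j: "\<tau> = insert (New (Abs_fset \<rho>) j) \<rho>" "j \<in> {1..<k}" by (auto simp: children_def)
    have lv: "lev (New (Abs_fset \<rho>) j) = Suc m" using NF_newlev[OF d \<rho>(1)] .
    have rinv: "finite \<rho>" "\<forall>u\<in>\<rho>. lev u \<le> m" using NF_inv[OF d \<rho>(1)] by auto
    show ?thesis
    proof (cases "New (Abs_fset \<rho>) j \<in> \<sigma>")
      case False
      hence sub: "\<sigma> \<subseteq> \<rho>" using that(2) j by auto
      have "\<sigma> = \<rho>" using card_subset_eq[OF _ sub] NF_inv[OF d \<rho>(1)] sinv by auto
      thus ?thesis using \<rho> by simp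
    next
      case True
      show ?thesis
      proof (cases "New (Abs_fset \<rho>) j = v0")
        case True
        hence "Abs_fset \<rho> = Abs_fset \<rho>0" "j = j0" by (auto simp: v0_def)
        hence "\<rho> = \<rho>0" using rinv(1) r0(1) by (simp add: Abs_fset_inject)
        thus ?thesis using j \<open>j = j0\<close> by (simp add: ow_def v0_def)
      next
        case False
        with True r(1) v0_def have "New (Abs_fset \<rho>) j \<in> \<rho>0" by auto
        hence "Suc m \<le> m0" using r0 lv by fastforce
        moreover have "v0 \<in> \<rho>" using \<open>v0 \<in> \<tau>\<close> j False by auto
        hence "Suc m0 \<le> m" using rinv lv0 by fastforce
        ultimately show ?thesis by simp
      qed
    qed
  qed
  moreover have "ow \<in> cells d k" using children_props(1)[OF d r(2) och] .
  moreover have "\<sigma> \<subseteq> ow" using r(1) by (auto simp: ow_def v0_def)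
  moreover have "Max (lev ` ow) = n" using children_props(3)[OF d r(2) och] Suc by simp
  moreover have "ow \<notin> children k \<sigma>"
  proof
    assume "ow \<in> children k \<sigma>"
    from children_props(3)[OF d \<sigma> this] show False using \<open>Max (lev ` ow) = n\<close> by simp
  qed
  ultimately show ?thesis by blast
qed

lemma faces_NF:
  assumes d: "1 \<le> d" and "\<sigma> \<in> faces d k"
  shows "\<exists>n. \<sigma> \<in> new_faces d k n"
proof -
  obtain \<tau> v where tv: "\<tau> \<in> cells d k" "v \<in> \<tau>" "\<sigma> = \<tau> - {v}" using assms(2) faces_def by auto
  show ?thesis
  proof (cases "\<tau> = root d")
    case True
    then obtain i where "i \<le> d" "v = Root i" using tv by (auto simp: root_def)
    hence "\<sigma> \<in> new_faces d k 0" using tv True by auto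
    thus ?thesis by blast
  next
    case False
    then obtain m \<rho> where \<rho>: "\<rho> \<in> new_faces d k m" "\<tau> \<in> children k \<rho>" using tv(1) cells_nonroot by blast
    then obtain j where j: "\<tau> = insert (New (Abs_fset \<rho>) j) \<rho>" "j \<in> {1..<k}" by (auto simp: children_def)
    have nin: "New (Abs_fset \<rho>) j \<notin> \<rho>" using NF_new_notin[OF d \<rho>(1)] .
    show ?thesis
    proof (cases "v = New (Abs_fset \<rho>) j")
      case True
      hence "\<sigma> = \<rho>" using tv j nin by auto
      thus ?thesis using \<rho> by blast
    next
      case False
      hence vr: "v \<in> \<rho>" using tv j by auto
      have "\<sigma> = insert (New (Abs_fset \<rho>) j) (\<rho> - {v})" using tv j False by auto
      hence "\<sigma> \<in> new_faces d k (Suc m)" using j(2) \<rho>(1) vr unfolding new_faces.simps by blast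
      thus ?thesis by blast
    qed
  qed
qed

lemma delta_card:
  assumes d: "1 \<le> d" and k: "1 \<le> k" and \<sigma>: "\<sigma> \<in> new_faces d k n"
  shows "finite (delta d k \<sigma>) \<and> card (delta d k \<sigma>) = k"
proof -
  obtain ow where ow: "ow \<in> cells d k" "\<sigma> \<subseteq> ow" "ow \<notin> children k \<sigma>"
     "\<forall>\<tau>\<in>cells d k. \<sigma> \<subseteq> \<tau> \<longrightarrow> \<tau> = ow \<or> \<tau> \<in> children k \<sigma>" using owner[OF d \<sigma>] by blast
  have "delta d k \<sigma> = insert ow (children k \<sigma>)"
    using ow children_props(1,2)[OF d \<sigma>] unfolding delta_def by blast
  moreover have "finite (children k \<sigma>)" by (simp add: children_def)
  ultimately show ?thesis using ow(3) card_children[OF d \<sigma>] k by simp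
qed


definition fc :: "(vtx \<Rightarrow> nat) \<Rightarrow> vtx set \<Rightarrow> nat \<Rightarrow> vtx set" where
  "fc \<Gamma> \<tau> i = {v \<in> \<tau>. \<Gamma> v \<noteq> i}"

locale L =
  fixes d k :: nat and \<Gamma> :: "vtx \<Rightarrow> nat" and \<Omega> :: "vtx set \<Rightarrow> int \<Rightarrow> vtx set \<Rightarrow> vtx set"
  assumes d: "1 \<le> d" and k: "1 \<le> k" and col: "coloring d k \<Gamma>" and ord: "k_ordering d k \<Omega>"
begin

lemma colors: assumes "\<tau> \<in> cells d k" shows "\<Gamma> ` \<tau> = {0..d}"
proof -
  have inj: "inj_on \<Gamma> \<tau>" using col assms by (simp add: coloring_def)
  have sub: "\<Gamma> ` \<tau> \<subseteq> {0..d}" using col assms by (auto simp: coloring_def verts_def)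
  have "card (\<Gamma> ` \<tau>) = Suc d" using card_image[OF inj] cell_props[OF d assms] by simp
  thus ?thesis using card_subset_eq[OF _ sub] by simp
qed

lemma col_ex: "\<tau> \<in> cells d k \<Longrightarrow> i \<le> d \<Longrightarrow> \<exists>x\<in>\<tau>. \<Gamma> x = i"
  using colors by (metis atLeastAtMost_iff imageE le0)

lemma col_le: "\<tau> \<in> cells d k \<Longrightarrow> x \<in> \<tau> \<Longrightarrow> \<Gamma> x \<le> d"
  using colors by fastforce

lemma fc_eq: assumes "\<tau> \<in> cells d k" "x \<in> \<tau>" "\<Gamma> x = i" shows "fc \<Gamma> \<tau> i = \<tau> - {x}"
proof -
  have inj: "inj_on \<Gamma> \<tau>" using col assms by (simp add: coloring_def)
  show ?thesis using assms inj unfolding fc_def by (auto dest: inj_onD)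
qed

lemma fc_face:
  assumes "\<tau> \<in> cells d k" "i \<le> d"
  shows "fc \<Gamma> \<tau> i \<in> faces d k" "fc \<Gamma> \<tau> i \<subseteq> \<tau>" "finite (fc \<Gamma> \<tau> i)" "card (fc \<Gamma> \<tau> i) = d"
    "\<tau> \<in> delta d k (fc \<Gamma> \<tau> i)"
proof -
  obtain x where x: "x \<in> \<tau>" "\<Gamma> x = i" using col_ex assms by blast
  have e: "fc \<Gamma> \<tau> i = \<tau> - {x}" using fc_eq assms x by blast
  show "fc \<Gamma> \<tau> i \<in> faces d k" using e x assms unfolding faces_def by blast
  show "fc \<Gamma> \<tau> i \<subseteq> \<tau>" using e by auto
  show "finite (fc \<Gamma> \<tau> i)" using e cell_props[OF d assms(1)] by simp
  show "card (fc \<Gamma> \<tau> i) = d" using e cell_props[OF d assms(1)] x by (simp add: card_Diff_singleton)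
  show "\<tau> \<in> delta d k (fc \<Gamma> \<tau> i)" using e assms unfolding delta_def by auto
qed

lemma fc_inv:
  assumes "\<tau> \<in> cells d k" "\<tau>' \<in> cells d k" "i \<le> d" "fc \<Gamma> \<tau> i \<subseteq> \<tau>'"
  shows "fc \<Gamma> \<tau>' i = fc \<Gamma> \<tau> i"
proof -
  have sub: "fc \<Gamma> \<tau> i \<subseteq> fc \<Gamma> \<tau>' i" using assms(4) unfolding fc_def by auto
  show ?thesis using card_subset_eq[OF fc_face(3)[OF assms(2,3)] sub] fc_face(4)[OF assms(1,3)]
      fc_face(4)[OF assms(2,3)] by simp
qed

lemma fc_neq:
  assumes "\<tau> \<in> cells d k" "i \<le> d" "i' \<le> d" "i \<noteq> i'"
  shows "fc \<Gamma> \<tau> i \<noteq> fc \<Gamma> \<tau> i'"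
proof -
  obtain x where x: "x \<in> \<tau>" "\<Gamma> x = i" using col_ex assms by blast
  hence "x \<in> fc \<Gamma> \<tau> i'" "x \<notin> fc \<Gamma> \<tau> i" using assms unfolding fc_def by auto
  thus ?thesis by blast
qed

lemma carr: "carrier (integer_mod_group k) = {0..<int k}"
  using k by (simp add: carrier_integer_mod_group)

lemma Om_hom: "\<sigma> \<in> faces d k \<Longrightarrow> \<Omega> \<sigma> \<in> hom (integer_mod_group k) (BijGroup (delta d k \<sigma>))"
  using ord by (simp add: k_ordering_def)

lemma Om_Bij: "\<sigma> \<in> faces d k \<Longrightarrow> l \<in> {0..<int k} \<Longrightarrow> \<Omega> \<sigma> l \<in> Bij (delta d k \<sigma>)"
  using Om_hom[of \<sigma>] carr unfolding hom_def BijGroup_def by auto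

lemma Om_in: "\<sigma> \<in> faces d k \<Longrightarrow> l \<in> {0..<int k} \<Longrightarrow> \<tau> \<in> delta d k \<sigma> \<Longrightarrow> \<Omega> \<sigma> l \<tau> \<in> delta d k \<sigma>"
  using Om_Bij Bij_imp_funcset by blast

lemma Om_zero: assumes "\<sigma> \<in> faces d k" "\<tau> \<in> delta d k \<sigma>" shows "\<Omega> \<sigma> 0 \<tau> = \<tau>"
proof -
  have "\<Omega> \<sigma> (one (integer_mod_group k)) = one (BijGroup (delta d k \<sigma>))"
    using hom_one[OF Om_hom[OF assms(1)] group_integer_mod_group group_BijGroup] by simp
  thus ?thesis using assms(2) by (simp add: BijGroup_def)
qed

lemma Om_mult:
  assumes "\<sigma> \<in> faces d k" "a \<in> {0..<int k}" "b \<in> {0..<int k}" "\<tau> \<in> delta d k \<sigma>"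
  shows "\<Omega> \<sigma> a (\<Omega> \<sigma> b \<tau>) = \<Omega> \<sigma> ((a + b) mod int k) \<tau>"
proof -
  have "\<Omega> \<sigma> (a \<otimes>\<^bsub>integer_mod_group k\<^esub> b) = \<Omega> \<sigma> a \<otimes>\<^bsub>BijGroup (delta d k \<sigma>)\<^esub> \<Omega> \<sigma> b"
    using hom_mult[OF Om_hom[OF assms(1)]] assms carr by simp
  moreover have "\<Omega> \<sigma> a \<in> Bij (delta d k \<sigma>)" "\<Omega> \<sigma> b \<in> Bij (delta d k \<sigma>)"
    using Om_Bij assms by auto
  ultimately have "\<Omega> \<sigma> ((a + b) mod int k) = compose (delta d k \<sigma>) (\<Omega> \<sigma> a) (\<Omega> \<sigma> b)"
    by (simp add: BijGroup_def)
  thus ?thesis using assms(4) by (simp add: compose_def)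
qed

lemma Om_trans: "\<sigma> \<in> faces d k \<Longrightarrow> \<tau> \<in> delta d k \<sigma> \<Longrightarrow> \<tau>' \<in> delta d k \<sigma> \<Longrightarrow> \<exists>l\<in>{0..<int k}. \<Omega> \<sigma> l \<tau> = \<tau>'"
  using ord carr by (auto simp: k_ordering_def)

lemma Om_inj:
  assumes "\<sigma> \<in> faces d k" "a \<in> {0..<int k}" "b \<in> {0..<int k}" "\<tau> \<in> delta d k \<sigma>"
    and eq: "\<Omega> \<sigma> a \<tau> = \<Omega> \<sigma> b \<tau>"
  shows "a = b"
proof -
  obtain n where n: "\<sigma> \<in> new_faces d k n" using faces_NF[OF d assms(1)] by blast
  have dc: "finite (delta d k \<sigma>)" "card (delta d k \<sigma>) = k" using delta_card[OF d k n] by auto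
  have im: "(\<lambda>l. \<Omega> \<sigma> l \<tau>) ` {0..<int k} = delta d k \<sigma>"
  proof
    show "(\<lambda>l. \<Omega> \<sigma> l \<tau>) ` {0..<int k} \<subseteq> delta d k \<sigma>" using Om_in assms by blast
    show "delta d k \<sigma> \<subseteq> (\<lambda>l. \<Omega> \<sigma> l \<tau>) ` {0..<int k}" using Om_trans[OF assms(1,4)] by blast
  qed
  have "card {0..<int k} = k" by simp
  hence "inj_on (\<lambda>l. \<Omega> \<sigma> l \<tau>) {0..<int k}" using im dc by (intro eq_card_imp_inj_on) auto
  thus ?thesis using assms(2,3) eq by (auto dest: inj_onD)
qed

abbreviation LA where "LA \<equiv> letter_act k \<Gamma> \<Omega>"

lemma LA_def': "LA i l \<tau> = \<Omega> (fc \<Gamma> \<tau> i) (l mod int k) \<tau>"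
  by (simp add: letter_act_def fc_def)

lemma modk: "l mod int k \<in> {0..<int k}" using k by simp

lemma LA_props:
  assumes "\<tau> \<in> cells d k" "i \<le> d"
  shows "LA i l \<tau> \<in> delta d k (fc \<Gamma> \<tau> i)" "LA i l \<tau> \<in> cells d k" "fc \<Gamma> (LA i l \<tau>) i = fc \<Gamma> \<tau> i"
proof -
  show 1: "LA i l \<tau> \<in> delta d k (fc \<Gamma> \<tau> i)"
    unfolding LA_def' using Om_in[OF fc_face(1)[OF assms] modk fc_face(5)[OF assms]] .
  thus 2: "LA i l \<tau> \<in> cells d k" by (simp add: delta_def)
  show "fc \<Gamma> (LA i l \<tau>) i = fc \<Gamma> \<tau> i" using fc_inv[OF assms(1) 2 assms(2)] 1 by (simp add: delta_def)
qed

lemma LA_comp: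
  assumes "\<tau> \<in> cells d k" "i \<le> d"
  shows "LA i a (LA i b \<tau>) = LA i (b + a) \<tau>"
proof -
  have "LA i a (LA i b \<tau>) = \<Omega> (fc \<Gamma> \<tau> i) (a mod int k) (\<Omega> (fc \<Gamma> \<tau> i) (b mod int k) \<tau>)"
    using LA_props(3)[OF assms, of b] by (simp add: LA_def')
  also have "\<dots> = \<Omega> (fc \<Gamma> \<tau> i) ((a mod int k + b mod int k) mod int k) \<tau>"
    using Om_mult[OF fc_face(1)[OF assms] modk modk fc_face(5)[OF assms]] .
  also have "(a mod int k + b mod int k) mod int k = (b + a) mod int k"
    by (simp add: mod_add_eq add.commute)
  finally show ?thesis by (simp add: LA_def')
qed

lemma LA_zero:
  assumes "\<tau> \<in> cells d k" "i \<le> d" "l mod int k = 0"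
  shows "LA i l \<tau> = \<tau>"
  using Om_zero[OF fc_face(1,5)[OF assms(1,2)]] assms(3) by (simp add: LA_def')

lemma LA_ne:
  assumes "\<tau> \<in> cells d k" "i \<le> d" "l mod int k \<noteq> 0"
  shows "LA i l \<tau> \<noteq> \<tau>"
proof
  assume "LA i l \<tau> = \<tau>"
  hence "\<Omega> (fc \<Gamma> \<tau> i) (l mod int k) \<tau> = \<Omega> (fc \<Gamma> \<tau> i) 0 \<tau>"
    using Om_zero[OF fc_face(1,5)[OF assms(1,2)]] by (simp add: LA_def')
  hence "l mod int k = 0" using Om_inj[OF fc_face(1)[OF assms(1,2)] modk _ fc_face(5)[OF assms(1,2)]] k by simp
  thus False using assms(3) by simp
qed

end

definition app :: "nat \<Rightarrow> (nat \<times> int) list \<Rightarrow> nat \<Rightarrow> int \<Rightarrow> (nat \<times> int) list" where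
  "app k q i e = (if e mod int k = 0 then q else q @ [(i, e mod int k)])"

definition push :: "nat \<Rightarrow> (nat \<times> int) list \<Rightarrow> nat \<times> int \<Rightarrow> (nat \<times> int) list" where
  "push k q x = (if q \<noteq> [] \<and> fst (last q) = fst x then app k (butlast q) (fst x) (snd (last q) + snd x)
                 else app k q (fst x) (snd x))"

abbreviation fp :: "nat \<Rightarrow> (nat \<times> int) list \<Rightarrow> (nat \<times> int) list \<Rightarrow> (nat \<times> int) list" where
  "fp k x p \<equiv> fold (\<lambda>y q. push k q y) x p"

definition winv :: "nat \<Rightarrow> (nat \<times> int) list \<Rightarrow> (nat \<times> int) list" where
  "winv k u = rev (map (\<lambda>(i, l). (i, int k - l)) u)"

definition okc :: "nat \<Rightarrow> (nat \<times> int) list \<Rightarrow> bool" where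
  "okc d w = (\<forall>x\<in>set w. fst x \<le> d)"

lemma reduced_prefix: assumes H: "reduced d k (a @ b)" shows "reduced d k a"
  unfolding reduced_def
proof safe
  show "\<And>j l. (j, l) \<in> set a \<Longrightarrow> j \<le> d" "\<And>j l. (j, l) \<in> set a \<Longrightarrow> 1 \<le> l" "\<And>j l. (j, l) \<in> set a \<Longrightarrow> l < int k"
    using H unfolding reduced_def by auto
  fix r assume r: "Suc r < length a" and eq: "fst (a ! r) = fst (a ! Suc r)"
  have "Suc r < length (a @ b)" using r by simp
  hence "fst ((a @ b) ! r) \<noteq> fst ((a @ b) ! Suc r)" using H unfolding reduced_def by blast
  thus False using r eq by (simp add: nth_append)
qed

lemma reduced_snoc:
  "reduced d k (q @ [x]) \<longleftrightarrow> reduced d k q \<and> (fst x \<le> d \<and> 1 \<le> snd x \<and> snd x < int k) \<and>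
     (q \<noteq> [] \<longrightarrow> fst (last q) \<noteq> fst x)"
proof
  assume H: "reduced d k (q @ [x])"
  have "reduced d k q" using reduced_prefix H by blast
  moreover have "fst x \<le> d \<and> 1 \<le> snd x \<and> snd x < int k" using H unfolding reduced_def
    by (cases x) auto
  moreover have "fst (last q) \<noteq> fst x" if "q \<noteq> []"
  proof -
    have "Suc (length q - 1) < length (q @ [x])" using that by simp
    hence "fst ((q @ [x]) ! (length q - 1)) \<noteq> fst ((q @ [x]) ! Suc (length q - 1))"
      using H unfolding reduced_def by blast
    thus ?thesis using that by (simp add: nth_append last_conv_nth)
  qed
  ultimately show "reduced d k q \<and> (fst x \<le> d \<and> 1 \<le> snd x \<and> snd x < int k) \<and>
     (q \<noteq> [] \<longrightarrow> fst (last q) \<noteq> fst x)" by blast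
next
  assume H: "reduced d k q \<and> (fst x \<le> d \<and> 1 \<le> snd x \<and> snd x < int k) \<and> (q \<noteq> [] \<longrightarrow> fst (last q) \<noteq> fst x)"
  show "reduced d k (q @ [x])" unfolding reduced_def
  proof safe
    show "\<And>j l. (j, l) \<in> set (q @ [x]) \<Longrightarrow> j \<le> d" "\<And>j l. (j, l) \<in> set (q @ [x]) \<Longrightarrow> 1 \<le> l"
      "\<And>j l. (j, l) \<in> set (q @ [x]) \<Longrightarrow> l < int k"
      using H unfolding reduced_def by auto
    fix r assume r: "Suc r < length (q @ [x])" and eq: "fst ((q @ [x]) ! r) = fst ((q @ [x]) ! Suc r)"
    show False
    proof (cases "Suc r < length q")
      case True
      thus False using H r eq unfolding reduced_def by (simp add: nth_append)
    next
      case False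
      hence "Suc r = length q" using r by simp
      hence "q \<noteq> []" "r = length q - 1" by auto
      thus False using H eq \<open>Suc r = length q\<close> by (simp add: nth_append last_conv_nth)
    qed
  qed
qed

lemma reduced_Cons:
  "reduced d k (x # q) \<longleftrightarrow> (fst x \<le> d \<and> 1 \<le> snd x \<and> snd x < int k) \<and> reduced d k q \<and>
     (q \<noteq> [] \<longrightarrow> fst x \<noteq> fst (hd q))"
proof
  assume H: "reduced d k (x # q)"
  have "fst x \<le> d \<and> 1 \<le> snd x \<and> snd x < int k" using H unfolding reduced_def by (cases x) auto
  moreover have "reduced d k q" unfolding reduced_def
  proof safe
    show "\<And>j l. (j, l) \<in> set q \<Longrightarrow> j \<le> d" "\<And>j l. (j, l) \<in> set q \<Longrightarrow> 1 \<le> l"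
      "\<And>j l. (j, l) \<in> set q \<Longrightarrow> l < int k"
      using H unfolding reduced_def by auto
    fix r assume "Suc r < length q" "fst (q ! r) = fst (q ! Suc r)"
    moreover have "Suc (Suc r) < length (x # q) \<longrightarrow> fst ((x # q) ! Suc r) \<noteq> fst ((x # q) ! Suc (Suc r))"
      using H unfolding reduced_def by blast
    ultimately show False by simp
  qed
  moreover have "fst x \<noteq> fst (hd q)" if "q \<noteq> []"
  proof -
    have "Suc 0 < length (x # q) \<longrightarrow> fst ((x # q) ! 0) \<noteq> fst ((x # q) ! Suc 0)"
      using H unfolding reduced_def by blast
    thus ?thesis using that by (simp add: hd_conv_nth)
  qed
  ultimately show "(fst x \<le> d \<and> 1 \<le> snd x \<and> snd x < int k) \<and> reduced d k q \<and>
     (q \<noteq> [] \<longrightarrow> fst x \<noteq> fst (hd q))" by blast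
next
  assume H: "(fst x \<le> d \<and> 1 \<le> snd x \<and> snd x < int k) \<and> reduced d k q \<and> (q \<noteq> [] \<longrightarrow> fst x \<noteq> fst (hd q))"
  show "reduced d k (x # q)" unfolding reduced_def
  proof safe
    show "\<And>j l. (j, l) \<in> set (x # q) \<Longrightarrow> j \<le> d" "\<And>j l. (j, l) \<in> set (x # q) \<Longrightarrow> 1 \<le> l"
      "\<And>j l. (j, l) \<in> set (x # q) \<Longrightarrow> l < int k"
      using H unfolding reduced_def by auto
    fix r assume r: "Suc r < length (x # q)" and eq: "fst ((x # q) ! r) = fst ((x # q) ! Suc r)"
    show False
    proof (cases r)
      case 0
      thus False using H r eq by (simp add: hd_conv_nth)
    next
      case (Suc r')
      thus False using H r eq unfolding reduced_def by simp
    qed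
  qed
qed

lemma reduced_Nil: "reduced d k []" by (simp add: reduced_def)

lemma reduced_butlast: "reduced d k q \<Longrightarrow> reduced d k (butlast q)"
  by (metis append_butlast_last_id butlast.simps(1) reduced_prefix)

lemma reduced_last:
  assumes "reduced d k q" "q \<noteq> []"
  shows "fst (last q) \<le> d" "1 \<le> snd (last q)" "snd (last q) < int k"
    "butlast q \<noteq> [] \<Longrightarrow> fst (last (butlast q)) \<noteq> fst (last q)"
  using assms reduced_snoc[of d k "butlast q" "last q"] by (simp_all add: append_butlast_last_id)

lemma app_mod: "e mod int k = e' mod int k \<Longrightarrow> app k q i e = app k q i e'"
  by (simp add: app_def)

lemma push_mod: "a mod int k = b mod int k \<Longrightarrow> push k q (i, a) = push k q (i, b)"
  unfolding push_def by (auto intro!: app_mod) (metis mod_add_right_eq)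

lemma push_zero:
  assumes "reduced d k q" "e mod int k = 0"
  shows "push k q (i, e) = q"
proof (cases "q \<noteq> [] \<and> fst (last q) = i")
  case True
  have c: "1 \<le> snd (last q)" "snd (last q) < int k" using reduced_last(2,3)[OF assms(1)] True by auto
  have "(snd (last q) + e) mod int k = (snd (last q) + e mod int k) mod int k" by (simp add: mod_add_right_eq)
  also have "\<dots> = snd (last q)" using c assms(2) by simp
  finally have "(snd (last q) + e) mod int k = snd (last q)" .
  hence "push k q (i, e) = butlast q @ [(i, snd (last q))]" using True c unfolding push_def app_def by auto
  also have "\<dots> = q" using True by (metis append_butlast_last_id prod.collapse)
  finally show ?thesis .
next
  case False
  thus ?thesis using assms unfolding push_def app_def by auto
qed

lemma app_red:
  assumes "reduced d k q" "q = [] \<or> fst (last q) \<noteq> i" "i \<le> d" "1 \<le> k"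
  shows "reduced d k (app k q i e)"
proof (cases "e mod int k = 0")
  case False
  have "0 \<le> e mod int k" "e mod int k < int k" using assms(4) by simp_all
  hence "1 \<le> e mod int k" "e mod int k < int k" using False by simp_all
  thus ?thesis using False assms reduced_snoc[of d k q "(i, e mod int k)"] unfolding app_def by auto
qed (simp add: app_def assms)

lemma push_red:
  assumes "reduced d k q" "fst x \<le> d" "1 \<le> k"
  shows "reduced d k (push k q x)"
proof (cases "q \<noteq> [] \<and> fst (last q) = fst x")
  case True
  have "butlast q = [] \<or> fst (last (butlast q)) \<noteq> fst x" using reduced_last(4)[OF assms(1)] True by auto
  thus ?thesis using True app_red reduced_butlast assms unfolding push_def by simp
next
  case False
  thus ?thesis using app_red assms unfolding push_def by auto
qed

lemma okc_app: "okc d q \<Longrightarrow> i \<le> d \<Longrightarrow> okc d (app k q i e)"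
  unfolding okc_def app_def by simp

lemma okc_butlast: "okc d q \<Longrightarrow> okc d (butlast q)"
  unfolding okc_def by (meson in_set_butlastD)

lemma okc_push: "okc d q \<Longrightarrow> fst x \<le> d \<Longrightarrow> okc d (push k q x)"
  unfolding push_def using okc_app okc_butlast by presburger

lemma okc_fp: "okc d p \<Longrightarrow> okc d x \<Longrightarrow> okc d (fp k x p)"
proof (induction x arbitrary: p)
  case (Cons y x)
  have y: "fst y \<le> d" "okc d x" using Cons.prems(2) by (simp_all add: okc_def)
  have "okc d (push k p y)" using okc_push[OF Cons.prems(1) y(1)] .
  note this y(2)
  thus ?case using Cons.IH by simp
qed simp

lemma fp_red: "reduced d k p \<Longrightarrow> okc d x \<Longrightarrow> 1 \<le> k \<Longrightarrow> reduced d k (fp k x p)"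
proof (induction x arbitrary: p)
  case (Cons y x)
  have y: "fst y \<le> d" "okc d x" using Cons.prems(2) by (simp_all add: okc_def)
  have "reduced d k (push k p y)" using push_red[OF Cons.prems(1) y(1) Cons.prems(3)] .
  note this y(2)
  thus ?case using Cons.IH Cons.prems(3) by simp
qed simp

lemma reduced_okc: "reduced d k w \<Longrightarrow> okc d w"
  unfolding reduced_def okc_def by auto

lemma lemA:
  assumes "q = [] \<or> fst (last q) \<noteq> i"
  shows "push k (app k q i e) (i, b) = app k q i (e + b)"
proof (cases "e mod int k = 0")
  case True
  hence "(e + b) mod int k = b mod int k" by (metis add_0 mod_add_left_eq)
  thus ?thesis using True assms unfolding push_def by (auto simp: app_def[of k q i e] intro: app_mod)
next
  case False
  hence "app k q i e = q @ [(i, e mod int k)]" by (simp add: app_def)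
  moreover have "(e mod int k + b) mod int k = (e + b) mod int k" by (simp add: mod_add_left_eq)
  ultimately show ?thesis unfolding push_def by (auto intro: app_mod)
qed

lemma lemM:
  assumes "reduced d k q"
  shows "push k (push k q (i, a)) (i, b) = push k q (i, a + b)"
proof (cases "q \<noteq> [] \<and> fst (last q) = i")
  case True
  have "butlast q = [] \<or> fst (last (butlast q)) \<noteq> i" using reduced_last(4)[OF assms] True by auto
  hence "push k (app k (butlast q) i (snd (last q) + a)) (i, b) = app k (butlast q) i (snd (last q) + a + b)"
    using lemA by blast
  moreover have "push k q (i, a) = app k (butlast q) i (snd (last q) + a)"
    "push k q (i, a + b) = app k (butlast q) i (snd (last q) + (a + b))"
    using True unfolding push_def by simp_all
  ultimately show ?thesis by (simp add: add.assoc)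
next
  case False
  hence qc: "q = [] \<or> fst (last q) \<noteq> i" by blast
  have "push k q (i, a) = app k q i a" "push k q (i, a + b) = app k q i (a + b)"
    using qc unfolding push_def by auto
  thus ?thesis using lemA[OF qc] by simp
qed

lemma lemF:
  assumes "reduced d k (fp k v p)"
  shows "fp k (app k v i e) p = push k (fp k v p) (i, e)"
proof (cases "e mod int k = 0")
  case True
  thus ?thesis using push_zero[OF assms True] by (simp add: app_def)
next
  case False
  hence "app k v i e = v @ [(i, e mod int k)]" by (simp add: app_def)
  hence "fp k (app k v i e) p = push k (fp k v p) (i, e mod int k)" by simp
  also have "\<dots> = push k (fp k v p) (i, e)" by (rule push_mod) simp
  finally show ?thesis .
qed

lemma lemP5:
  assumes p: "reduced d k p" and v: "reduced d k v" and y: "fst y \<le> d" and k: "1 \<le> k"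
  shows "fp k (push k v y) p = push k (fp k v p) y"
proof -
  obtain i b where yb: "y = (i, b)" by (cases y)
  show ?thesis
  proof (cases "v \<noteq> [] \<and> fst (last v) = i")
    case True
    define v' where "v' = butlast v"
    have vv: "v = v' @ [(i, snd (last v))]" using True v'_def by (metis append_butlast_last_id prod.collapse)
    have rv': "reduced d k (fp k v' p)" using fp_red[OF p _ k] reduced_okc[OF reduced_butlast[OF v]] v'_def by blast
    have "fp k (push k v y) p = fp k (app k v' i (snd (last v) + b)) p"
      using True yb unfolding push_def v'_def by simp
    also have "\<dots> = push k (fp k v' p) (i, snd (last v) + b)" using lemF[OF rv'] .
    also have "\<dots> = push k (push k (fp k v' p) (i, snd (last v))) (i, b)" using lemM[OF rv'] by simp
    also have "\<dots> = push k (fp k v p) y"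
    proof -
      define c where "c = snd (last v)"
      have "fp k v p = fp k (v' @ [(i, c)]) p" using vv c_def by simp
      also have "\<dots> = push k (fp k v' p) (i, c)" by simp
      finally show ?thesis using yb c_def by simp
    qed
    finally show ?thesis .
  next
    case False
    hence "push k v y = app k v i b" using yb unfolding push_def by auto
    moreover have "reduced d k (fp k v p)" using fp_red[OF p reduced_okc[OF v] k] .
    ultimately show ?thesis using lemF yb by simp
  qed
qed

definition red :: "nat \<Rightarrow> (nat \<times> int) list \<Rightarrow> (nat \<times> int) list" where
  "red k x = fp k x []"

lemma red_red: "okc d x \<Longrightarrow> 1 \<le> k \<Longrightarrow> reduced d k (red k x)"
  unfolding red_def using fp_red reduced_Nil by blast

lemma assoc:
  assumes p: "reduced d k p" and k: "1 \<le> k"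
  shows "okc d x \<Longrightarrow> fp k x p = fp k (red k x) p"
proof (induction x rule: rev_induct)
  case Nil
  then show ?case by (simp add: red_def)
next
  case (snoc y x)
  have ox: "okc d x" "fst y \<le> d" using snoc.prems by (auto simp: okc_def)
  have "fp k (x @ [y]) p = push k (fp k (red k x) p) y" using snoc.IH ox by simp
  also have "\<dots> = fp k (push k (red k x) y) p" using lemP5[OF p red_red[OF ox(1) k] ox(2) k] by simp
  also have "push k (red k x) y = red k (x @ [y])" by (simp add: red_def)
  finally show ?case .
qed

lemma fp_id: "reduced d k (p @ x) \<Longrightarrow> fp k x p = p @ x"
proof (induction x arbitrary: p)
  case (Cons y x)
  have r: "reduced d k (p @ [y])" using reduced_prefix[of d k "p @ [y]" x] Cons.prems by simp
  hence y: "1 \<le> snd y" "snd y < int k" "p \<noteq> [] \<longrightarrow> fst (last p) \<noteq> fst y" using reduced_snoc by blast+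
  have "push k p y = p @ [y]" using y unfolding push_def app_def by (cases y) auto
  thus ?case using Cons.IH[of "p @ [y]"] Cons.prems by simp
qed simp

lemma red_id: "reduced d k w \<Longrightarrow> red k w = w"
  unfolding red_def using fp_id[of d k "[]" w] by simp

lemma winv_Cons: "winv k (x # u) = winv k u @ [(fst x, int k - snd x)]"
  by (cases x) (simp add: winv_def)

lemma winv_snoc: "winv k (u @ [x]) = (fst x, int k - snd x) # winv k u"
  by (cases x) (simp add: winv_def)

lemma C1: "fp k u (winv k u) = []"
proof (induction u)
  case (Cons x u)
  have "push k (winv k u @ [(fst x, int k - snd x)]) x = winv k u"
    unfolding push_def app_def by simp
  thus ?case using Cons.IH by (simp add: winv_Cons)
qed (simp add: winv_def)

lemma C2: "fp k (winv k u) u = []"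
proof (induction u rule: rev_induct)
  case (snoc x u)
  have "push k (u @ [x]) (fst x, int k - snd x) = u"
    unfolding push_def app_def by simp
  thus ?case using snoc.IH by (simp add: winv_snoc)
qed (simp add: winv_def)

lemma winv_red: "reduced d k u \<Longrightarrow> reduced d k (winv k u)"
proof (induction u)
  case Nil thus ?case by (simp add: winv_def reduced_Nil)
next
  case (Cons x u)
  have H: "fst x \<le> d" "1 \<le> snd x" "snd x < int k" "reduced d k u" "u \<noteq> [] \<longrightarrow> fst x \<noteq> fst (hd u)"
    using Cons.prems reduced_Cons by blast+
  have "u \<noteq> [] \<Longrightarrow> fst (last (winv k u)) = fst (hd u)"
    by (cases "hd u") (simp add: winv_def last_rev hd_map)
  moreover have "winv k u = [] \<longleftrightarrow> u = []" by (simp add: winv_def)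
  ultimately show ?case using H Cons.IH reduced_snoc[of d k "winv k u" "(fst x, int k - snd x)"]
    by (auto simp: winv_Cons)
qed

context L begin

abbreviation WA where "WA \<equiv> word_act k \<Gamma> \<Omega>"

lemma WA_snoc: "WA (q @ [(i, l)]) \<tau> = LA i l (WA q \<tau>)"
  by (simp add: word_act_def)

lemma WA_append: "WA (x @ y) \<tau> = WA y (WA x \<tau>)"
  by (simp add: word_act_def)

lemma WA_Nil: "WA [] \<tau> = \<tau>" by (simp add: word_act_def)

lemma WA_cells: "\<tau> \<in> cells d k \<Longrightarrow> okc d x \<Longrightarrow> WA x \<tau> \<in> cells d k"
proof (induction x arbitrary: \<tau> rule: rev_induct)
  case (snoc y x)
  thus ?case using LA_props(2) by (cases y) (auto simp: okc_def WA_snoc)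
qed (simp add: WA_Nil)

lemma WA_app:
  assumes "\<tau> \<in> cells d k" "okc d q" "i \<le> d"
  shows "WA (app k q i e) \<tau> = LA i e (WA q \<tau>)"
proof (cases "e mod int k = 0")
  case True
  thus ?thesis using LA_zero[OF WA_cells[OF assms(1,2)] assms(3)] by (simp add: app_def)
next
  case False
  thus ?thesis by (simp add: app_def WA_snoc LA_def')
qed

lemma WA_push:
  assumes "\<tau> \<in> cells d k" "okc d q" "fst x \<le> d"
  shows "WA (push k q x) \<tau> = LA (fst x) (snd x) (WA q \<tau>)"
proof (cases "q \<noteq> [] \<and> fst (last q) = fst x")
  case True
  have qq: "q = butlast q @ [(fst x, snd (last q))]" using True by (metis append_butlast_last_id prod.collapse)
  have ob: "okc d (butlast q)" using okc_butlast[OF assms(2)] .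
  have "WA (push k q x) \<tau> = LA (fst x) (snd (last q) + snd x) (WA (butlast q) \<tau>)"
    using True WA_app[OF assms(1) ob assms(3)] unfolding push_def by simp
  also have "\<dots> = LA (fst x) (snd x) (LA (fst x) (snd (last q)) (WA (butlast q) \<tau>))"
    using LA_comp[OF WA_cells[OF assms(1) ob] assms(3)] by simp
  also have "\<dots> = LA (fst x) (snd x) (WA q \<tau>)" using qq WA_snoc by metis
  finally show ?thesis .
next
  case False
  hence "push k q x = app k q (fst x) (snd x)" unfolding push_def by auto
  thus ?thesis using WA_app[OF assms] by simp
qed

lemma WA_fp:
  assumes "\<tau> \<in> cells d k"
  shows "okc d p \<Longrightarrow> okc d x \<Longrightarrow> WA (fp k x p) \<tau> = WA x (WA p \<tau>)"
proof (induction x arbitrary: p)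
  case Nil thus ?case by (simp add: WA_Nil)
next
  case (Cons y x)
  have y: "fst y \<le> d" "okc d x" using Cons.prems by (auto simp: okc_def)
  have "WA (fp k (y # x) p) \<tau> = WA x (WA (push k p y) \<tau>)"
    using Cons.IH[OF okc_push[OF Cons.prems(1) y(1)] y(2)] by simp
  also have "WA (push k p y) \<tau> = WA [y] (WA p \<tau>)"
    using WA_push[OF assms Cons.prems(1) y(1)] by (cases y) (simp add: word_act_def)
  finally show ?case by (simp add: word_act_def)
qed

end

context L begin

lemma step:
  assumes red: "reduced d k (w' @ [(i, l)])"
    and IH: "WA w' (root d) \<in> cells d k \<and> (w' = [] \<longrightarrow> WA w' (root d) = root d) \<and>
      (w' \<noteq> [] \<longrightarrow> fc \<Gamma> (WA w' (root d)) (fst (last w')) \<in> new_faces d k (length w' - 1) \<and>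
        WA w' (root d) \<in> children k (fc \<Gamma> (WA w' (root d)) (fst (last w'))))"
  shows "fc \<Gamma> (WA w' (root d)) i \<in> new_faces d k (length w') \<and>
         WA w' (root d) \<notin> children k (fc \<Gamma> (WA w' (root d)) i)"
proof -
  define \<tau>' where "\<tau>' = WA w' (root d)"
  have R: "reduced d k w'" "i \<le> d" "w' \<noteq> [] \<longrightarrow> fst (last w') \<noteq> i"
    using red reduced_snoc[of d k w' "(i, l)"] by auto
  have c': "\<tau>' \<in> cells d k" using IH \<tau>'_def by simp
  show ?thesis
  proof (cases "w' = []")
    case True
    hence t: "\<tau>' = root d" using IH \<tau>'_def by simp
    obtain x where x: "x \<in> root d" "\<Gamma> x = i" using col_ex c' t R(2) by blast
    obtain c where cx: "x = Root c" "c \<le> d" using x(1) by (auto simp: root_def)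
    have "fc \<Gamma> \<tau>' i = root d - {Root c}" using fc_eq[OF c' _ x(2)] x(1) t cx by simp
    hence "fc \<Gamma> \<tau>' i \<in> new_faces d k 0" using cx by auto
    thus ?thesis using True t cells_not_child_root \<tau>'_def by simp
  next
    case False
    define i' where "i' = fst (last w')"
    have ii: "i' \<noteq> i" "i' \<le> d" using R False reduced_last[OF R(1) False] i'_def by auto
    define \<rho> where "\<rho> = fc \<Gamma> \<tau>' i'"
    have \<rho>: "\<rho> \<in> new_faces d k (length w' - 1)" "\<tau>' \<in> children k \<rho>"
      using IH False \<rho>_def \<tau>'_def i'_def by auto
    obtain j where j: "\<tau>' = insert (New (Abs_fset \<rho>) j) \<rho>" "j \<in> {1..<k}" using \<rho>(2) unfolding children_def by blast
    have vn: "New (Abs_fset \<rho>) j \<notin> \<rho>" using NF_new_notin[OF d \<rho>(1)] .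
    obtain x where x: "x \<in> \<tau>'" "\<Gamma> x = i" using col_ex c' R(2) by blast
    have sx: "fc \<Gamma> \<tau>' i = \<tau>' - {x}" using fc_eq[OF c' x] .
    have "x \<noteq> New (Abs_fset \<rho>) j"
    proof
      assume "x = New (Abs_fset \<rho>) j"
      hence "fc \<Gamma> \<tau>' i = \<rho>" using sx j vn by auto
      thus False using fc_neq[OF c' R(2) ii(2)] ii(1) \<rho>_def by auto
    qed
    hence xr: "x \<in> \<rho>" using x(1) j by auto
    have "fc \<Gamma> \<tau>' i = insert (New (Abs_fset \<rho>) j) (\<rho> - {x})" using sx j xr \<open>x \<noteq> _\<close> by auto
    hence nf: "fc \<Gamma> \<tau>' i \<in> new_faces d k (Suc (length w' - 1))" using \<rho>(1) xr j(2) unfolding new_faces.simps by blast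
    have "Suc (length w' - 1) = length w'" using False by simp
    hence nf': "fc \<Gamma> \<tau>' i \<in> new_faces d k (length w')" using nf by simp
    have "Max (lev ` \<tau>') = length w'" using children_props(3)[OF d \<rho>] False by simp
    hence "\<tau>' \<notin> children k (fc \<Gamma> \<tau>' i)" using children_props(3)[OF d nf', of \<tau>'] by auto
    thus ?thesis using nf' \<tau>'_def by simp
  qed
qed

lemma W0:
  "reduced d k w \<Longrightarrow> WA w (root d) \<in> cells d k \<and> (w = [] \<longrightarrow> WA w (root d) = root d) \<and>
      (w \<noteq> [] \<longrightarrow> fc \<Gamma> (WA w (root d)) (fst (last w)) \<in> new_faces d k (length w - 1) \<and>
        WA w (root d) \<in> children k (fc \<Gamma> (WA w (root d)) (fst (last w))))"
proof (induction w rule: rev_induct)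
  case Nil
  thus ?case by (simp add: WA_Nil cells_def)
next
  case (snoc x w')
  obtain i l where x: "x = (i, l)" by (cases x)
  have red: "reduced d k (w' @ [(i, l)])" using snoc.prems x by simp
  have R: "reduced d k w'" "i \<le> d" "1 \<le> l" "l < int k" using red reduced_snoc[of d k w' "(i, l)"] by auto
  note IH = snoc.IH[OF R(1)]
  define \<tau>' where "\<tau>' = WA w' (root d)"
  define \<sigma> where "\<sigma> = fc \<Gamma> \<tau>' i"
  have st: "\<sigma> \<in> new_faces d k (length w')" "\<tau>' \<notin> children k \<sigma>"
    using step[OF red IH] \<sigma>_def \<tau>'_def by auto
  have c': "\<tau>' \<in> cells d k" using IH \<tau>'_def by simp
  define \<tau> where "\<tau> = LA i l \<tau>'"
  have tw: "WA (w' @ [x]) (root d) = \<tau>" using x \<tau>_def \<tau>'_def WA_snoc by simp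
  have td: "\<tau> \<in> delta d k \<sigma>" "\<tau> \<in> cells d k" "fc \<Gamma> \<tau> i = \<sigma>"
    using LA_props[OF c' R(2)] \<tau>_def \<sigma>_def by auto
  have "l mod int k = l" using R by simp
  hence ne: "\<tau> \<noteq> \<tau>'" using LA_ne[OF c' R(2)] R \<tau>_def by simp
  obtain ow where ow: "\<forall>t\<in>cells d k. \<sigma> \<subseteq> t \<longrightarrow> t = ow \<or> t \<in> children k \<sigma>"
    using owner[OF d st(1)] by blast
  have "\<tau>' = ow" using ow c' st(2) fc_face(2)[OF c' R(2)] \<sigma>_def by blast
  hence ch: "\<tau> \<in> children k \<sigma>" using ow td ne by (auto simp: delta_def)
  show ?case using tw td ch st x by simp
qed

lemma Wlev: "reduced d k w \<Longrightarrow> Max (lev ` WA w (root d)) = length w"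
proof (cases "w = []")
  case True thus ?thesis by (simp add: WA_Nil root_Max)
next
  case False
  assume "reduced d k w"
  with False W0 have "fc \<Gamma> (WA w (root d)) (fst (last w)) \<in> new_faces d k (length w - 1)"
    "WA w (root d) \<in> children k (fc \<Gamma> (WA w (root d)) (fst (last w)))" by auto
  from children_props(3)[OF d this] show ?thesis using False by simp
qed

lemma R2:
  "reduced d k v1 \<Longrightarrow> reduced d k v2 \<Longrightarrow> WA v1 (root d) = WA v2 (root d) \<Longrightarrow> v1 = v2"
proof (induction v1 arbitrary: v2 rule: rev_induct)
  case Nil
  hence "length v2 = 0" using Wlev by (metis list.size(3))
  thus ?case by simp
next
  case (snoc x v1')
  obtain i1 l1 where x: "x = (i1, l1)" by (cases x)
  have "length v2 = Suc (length v1')" using Wlev snoc.prems by (metis length_append_singleton)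
  then obtain v2' y where v2: "v2 = v2' @ [y]" by (metis length_Suc_conv_rev)
  obtain i2 l2 where y: "y = (i2, l2)" by (cases y)
  have r1: "reduced d k (v1' @ [(i1, l1)])" and r2: "reduced d k (v2' @ [(i2, l2)])"
    using snoc.prems x v2 y by auto
  have R1: "reduced d k v1'" "i1 \<le> d" "1 \<le> l1" "l1 < int k" using r1 reduced_snoc[of d k v1' "(i1, l1)"] by auto
  have R2: "reduced d k v2'" "i2 \<le> d" "1 \<le> l2" "l2 < int k" using r2 reduced_snoc[of d k v2' "(i2, l2)"] by auto
  define \<tau> where "\<tau> = WA (v1' @ [x]) (root d)"
  have W1: "fc \<Gamma> \<tau> i1 \<in> new_faces d k (length v1')" "\<tau> \<in> children k (fc \<Gamma> \<tau> i1)" "\<tau> \<in> cells d k"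
    using W0[OF r1] \<tau>_def x by auto
  have W2: "fc \<Gamma> \<tau> i2 \<in> new_faces d k (length v2')" "\<tau> \<in> children k (fc \<Gamma> \<tau> i2)"
    using W0[OF r2] \<tau>_def snoc.prems(3) x v2 y by auto
  have "fc \<Gamma> \<tau> i1 = fc \<Gamma> \<tau> i2" using children_unique[OF d W1(1) W2(1) W1(2) W2(2)] .
  hence ieq: "i1 = i2" using fc_neq[OF W1(3) R1(2) R2(2)] by blast
  define t1 where "t1 = WA v1' (root d)"
  define t2 where "t2 = WA v2' (root d)"
  have c1: "t1 \<in> cells d k" and c2: "t2 \<in> cells d k" using W0[OF R1(1)] W0[OF R2(1)] t1_def t2_def by auto
  have tt1: "\<tau> = LA i1 l1 t1" using \<tau>_def t1_def x WA_snoc by simp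
  have tt2: "\<tau> = LA i1 l2 t2" using \<tau>_def t2_def snoc.prems(3) v2 y ieq WA_snoc x by simp
  define \<sigma> where "\<sigma> = fc \<Gamma> \<tau> i1"
  have s1: "fc \<Gamma> t1 i1 = \<sigma>" using LA_props(3)[OF c1 R1(2)] tt1 \<sigma>_def by simp
  have s2: "fc \<Gamma> t2 i1 = \<sigma>" using LA_props(3)[OF c2 R1(2)] tt2 \<sigma>_def by simp
  have st1: "t1 \<notin> children k \<sigma>" using step[OF r1 W0[OF R1(1)]] s1 t1_def by simp
  have st2: "t2 \<notin> children k \<sigma>" using step[OF r2 W0[OF R2(1)]] s2 t2_def ieq by simp
  obtain ow where ow: "\<forall>t\<in>cells d k. \<sigma> \<subseteq> t \<longrightarrow> t = ow \<or> t \<in> children k \<sigma>"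
    using owner[OF d W1(1)] \<sigma>_def by blast
  have "t1 = ow" using ow c1 st1 fc_face(2)[OF c1 R1(2)] s1 by blast
  moreover have "t2 = ow" using ow c2 st2 fc_face(2)[OF c2 R1(2)] s2 by blast
  ultimately have teq: "t1 = t2" by simp
  have "\<Omega> \<sigma> (l1 mod int k) t1 = \<Omega> \<sigma> (l2 mod int k) t1"
    using tt1 tt2 teq s1 by (simp add: LA_def')
  hence "l1 mod int k = l2 mod int k"
    using Om_inj[OF fc_face(1)[OF c1 R1(2)] modk modk fc_face(5)[OF c1 R1(2)]] s1 by simp
  hence leq: "l1 = l2" using R1 R2 by simp
  have "v1' = v2'" using snoc.IH[OF R1(1) R2(1)] teq t1_def t2_def by simp
  thus ?case using x v2 y ieq leq by simp
qed

lemma cell_lev0: assumes "\<tau> \<in> cells d k" "Max (lev ` \<tau>) = 0" shows "\<tau> = root d"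
proof (rule ccontr)
  assume "\<tau> \<noteq> root d"
  then obtain n \<sigma> where "\<sigma> \<in> new_faces d k n" "\<tau> \<in> children k \<sigma>" using cells_nonroot assms(1) by blast
  from children_props(3)[OF d this] show False using assms(2) by simp
qed

lemma cell_levSuc:
  assumes "\<tau> \<in> cells d k" "Max (lev ` \<tau>) = Suc n"
  obtains \<rho> where "\<rho> \<in> new_faces d k n" "\<tau> \<in> children k \<rho>"
proof -
  have "\<tau> \<noteq> root d" using assms root_Max[of d] by auto
  then obtain m \<rho> where \<rho>: "\<rho> \<in> new_faces d k m" "\<tau> \<in> children k \<rho>" using assms(1) cells_nonroot by blast
  have "m = n" using children_props(3)[OF d \<rho>] assms by simp
  thus ?thesis using that \<rho> by blast
qed

lemma R1aux: "\<forall>\<tau>\<in>cells d k. Max (lev ` \<tau>) = n \<longrightarrow> (\<exists>x. okc d x \<and> WA x (root d) = \<tau>)"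
proof (induction n)
  case 0
  show ?case using cell_lev0 by (metis WA_Nil okc_def empty_iff list.set(1))
next
  case (Suc n)
  show ?case
  proof safe
    fix \<tau> assume c: "\<tau> \<in> cells d k" and m: "Max (lev ` \<tau>) = Suc n"
    obtain \<rho> where \<rho>: "\<rho> \<in> new_faces d k n" "\<tau> \<in> children k \<rho>" using cell_levSuc[OF c m] by blast
    obtain ow where ow: "ow \<in> cells d k" "\<rho> \<subseteq> ow" "Max (lev ` ow) = n"
      using owner[OF d \<rho>(1)] by blast
    obtain x where x: "okc d x" "WA x (root d) = ow" using Suc.IH ow by blast
    have ri: "finite \<rho>" "card \<rho> = d" using NF_inv[OF d \<rho>(1)] by auto
    have oi: "finite ow" "card ow = Suc d" using cell_props[OF d ow(1)] by auto
    have "\<rho> \<noteq> ow" using ri oi by auto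
    then obtain y where y: "y \<in> ow" "y \<notin> \<rho>" using ow(2) by blast
    define i where "i = \<Gamma> y"
    have il: "i \<le> d" using col_le[OF ow(1) y(1)] i_def by simp
    have fe: "fc \<Gamma> ow i = ow - {y}" using fc_eq[OF ow(1) y(1)] i_def by simp
    have "\<rho> \<subseteq> ow - {y}" using ow(2) y by auto
    moreover have "card (ow - {y}) = d" using oi y by (simp add: card_Diff_singleton)
    ultimately have "\<rho> = ow - {y}" using card_subset_eq[of "ow - {y}" \<rho>] oi ri by simp
    hence fr: "fc \<Gamma> ow i = \<rho>" using fe by simp
    have "\<tau> \<in> delta d k \<rho>" using children_props(1,2)[OF d \<rho>] by (simp add: delta_def)
    moreover have "ow \<in> delta d k \<rho>" using ow by (simp add: delta_def)
    moreover have rf: "\<rho> \<in> faces d k" using fc_face(1)[OF ow(1) il] fr by simp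
    ultimately obtain l where l: "l \<in> {0..<int k}" "\<Omega> \<rho> l ow = \<tau>" using Om_trans by blast
    have "LA i l ow = \<tau>" using l fr by (simp add: LA_def')
    hence "WA (x @ [(i, l)]) (root d) = \<tau>" using x WA_snoc by simp
    moreover have "okc d (x @ [(i, l)])" using x il by (simp add: okc_def)
    ultimately show "\<exists>x. okc d x \<and> WA x (root d) = \<tau>" by blast
  qed
qed

lemma R1: "\<tau> \<in> cells d k \<Longrightarrow> \<exists>u. reduced d k u \<and> WA u (root d) = \<tau>"
proof -
  assume c: "\<tau> \<in> cells d k"
  obtain x where x: "okc d x" "WA x (root d) = \<tau>" using R1aux c by blast
  have "WA (red k x) (root d) = WA x (WA [] (root d))"
    unfolding red_def using WA_fp[of "root d" "[]" x] x(1) by (simp add: okc_def cells_def)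
  thus ?thesis using red_red[OF x(1) k] x(2) by (auto simp: WA_Nil)
qed

lemma walk_Cons:
  "line_walk d k (a # p) \<longleftrightarrow> (if p = [] then a \<in> cells d k else line_adj d k a (hd p) \<and> line_walk d k p)"
proof (cases "p = []")
  case True thus ?thesis by (simp add: line_walk_def)
next
  case False
  show ?thesis
  proof
    assume H: "line_walk d k (a # p)"
    have "line_adj d k a (hd p)" using H False unfolding line_walk_def
      by (metis hd_conv_nth length_Cons length_greater_0_conv nat.simps(1) nth_Cons_0 nth_Cons_Suc zero_less_Suc Suc_less_eq)
    moreover have "line_walk d k p" using H False unfolding line_walk_def
      by (metis Suc_less_eq length_Cons nth_Cons_Suc set_subset_Cons subset_trans)
    ultimately show "if p = [] then a \<in> cells d k else line_adj d k a (hd p) \<and> line_walk d k p" using False by simp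
  next
    assume "if p = [] then a \<in> cells d k else line_adj d k a (hd p) \<and> line_walk d k p"
    hence H: "line_adj d k a (hd p)" "line_walk d k p" using False by auto
    have "a \<in> cells d k" using H(1) line_adj_def by blast
    moreover have "line_adj d k ((a # p) ! i) ((a # p) ! Suc i)" if "Suc i < length (a # p)" for i
    proof (cases i)
      case 0 thus ?thesis using H(1) False by (simp add: hd_conv_nth)
    next
      case (Suc i') thus ?thesis using H(2) that unfolding line_walk_def by simp
    qed
    ultimately show "line_walk d k (a # p)" using H(2) unfolding line_walk_def by auto
  qed
qed

lemma adj_lev:
  assumes "line_adj d k t1 t2" shows "Max (lev ` t1) \<le> Suc (Max (lev ` t2))"
proof -
  obtain \<sigma> where s: "\<sigma> \<in> faces d k" "\<sigma> \<subseteq> t1" "\<sigma> \<subseteq> t2" "t1 \<in> cells d k" "t2 \<in> cells d k"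
    using assms line_adj_def by blast
  obtain n where n: "\<sigma> \<in> new_faces d k n" using faces_NF[OF d s(1)] by blast
  obtain ow where ow: "Max (lev ` ow) = n" "\<forall>t\<in>cells d k. \<sigma> \<subseteq> t \<longrightarrow> t = ow \<or> t \<in> children k \<sigma>"
    using owner[OF d n] by blast
  have o1: "t1 = ow \<or> t1 \<in> children k \<sigma>" using ow(2) s(2,4) by blast
  have o2: "t2 = ow \<or> t2 \<in> children k \<sigma>" using ow(2) s(3,5) by blast
  have "Max (lev ` t1) \<le> Suc n"
  proof (cases "t1 = ow")
    case True thus ?thesis using ow(1) by simp
  next
    case False thus ?thesis using o1 children_props(3)[OF d n, of t1] by simp
  qed
  moreover have "n \<le> Max (lev ` t2)"
  proof (cases "t2 = ow")
    case True thus ?thesis using ow(1) by simp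
  next
    case False thus ?thesis using o2 children_props(3)[OF d n, of t2] by simp
  qed
  ultimately show ?thesis by simp
qed

lemma walk_lev: "line_walk d k p \<Longrightarrow> Max (lev ` hd p) \<le> Max (lev ` last p) + (length p - 1)"
proof (induction p)
  case Nil thus ?case by (simp add: line_walk_def)
next
  case (Cons a p)
  show ?case
  proof (cases "p = []")
    case True thus ?thesis by simp
  next
    case False
    have H: "line_adj d k a (hd p)" "line_walk d k p" using Cons.prems False walk_Cons by auto
    have "Max (lev ` a) \<le> Suc (Max (lev ` hd p))" using adj_lev[OF H(1)] .
    moreover have "Max (lev ` hd p) \<le> Max (lev ` last p) + (length p - 1)" using Cons.IH[OF H(2)] .
    moreover have "length p \<ge> 1" using False by (cases p) auto
    ultimately have "Max (lev ` a) \<le> Max (lev ` last p) + length p" by linarith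
    thus ?thesis using False by simp
  qed
qed

lemma walk_ex: "\<forall>\<tau>\<in>cells d k. Max (lev ` \<tau>) = n \<longrightarrow>
   (\<exists>p. line_walk d k p \<and> hd p = \<tau> \<and> last p = root d \<and> length p = Suc n)"
proof (induction n)
  case 0
  show ?case
  proof safe
    fix \<tau> assume "\<tau> \<in> cells d k" "Max (lev ` \<tau>) = 0"
    hence "\<tau> = root d" using cell_lev0 by blast
    thus "\<exists>p. line_walk d k p \<and> hd p = \<tau> \<and> last p = root d \<and> length p = Suc 0"
      by (intro exI[of _ "[root d]"]) (simp add: line_walk_def cells_def)
  qed
next
  case (Suc n)
  show ?case
  proof safe
    fix \<tau> assume c: "\<tau> \<in> cells d k" and m: "Max (lev ` \<tau>) = Suc n"
    obtain \<rho> where \<rho>: "\<rho> \<in> new_faces d k n" "\<tau> \<in> children k \<rho>" using cell_levSuc[OF c m] by blast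
    obtain ow where ow: "ow \<in> cells d k" "\<rho> \<subseteq> ow" "Max (lev ` ow) = n"
      using owner[OF d \<rho>(1)] by blast
    obtain p where p: "line_walk d k p" "hd p = ow" "last p = root d" "length p = Suc n"
      using Suc.IH ow by blast
    obtain j where j: "\<tau> = insert (New (Abs_fset \<rho>) j) \<rho>" using \<rho>(2) by (auto simp: children_def)
    have vn: "New (Abs_fset \<rho>) j \<notin> \<rho>" using NF_new_notin[OF d \<rho>(1)] .
    have "\<rho> = \<tau> - {New (Abs_fset \<rho>) j}" using j vn by auto
    hence rf: "\<rho> \<in> faces d k" using c j unfolding faces_def by blast
    have "\<tau> \<noteq> ow" using m ow by auto
    hence "line_adj d k \<tau> ow" using c ow rf j unfolding line_adj_def by blast
    hence "line_walk d k (\<tau> # p)" using p walk_Cons[of \<tau> p] by auto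
    moreover have "p \<noteq> []" using p by auto
    ultimately show "\<exists>p. line_walk d k p \<and> hd p = \<tau> \<and> last p = root d \<and> length p = Suc (Suc n)"
      using p by (intro exI[of _ "\<tau> # p"]) simp
  qed
qed

lemma dist: assumes "\<tau> \<in> cells d k" shows "line_dist d k \<tau> (root d) = Max (lev ` \<tau>)"
  unfolding line_dist_def
proof (rule Least_equality)
  show "\<exists>p. line_walk d k p \<and> hd p = \<tau> \<and> last p = root d \<and> length p = Suc (Max (lev ` \<tau>))"
    using walk_ex assms by blast
next
  fix m assume "\<exists>p. line_walk d k p \<and> hd p = \<tau> \<and> last p = root d \<and> length p = Suc m"
  then obtain p where p: "line_walk d k p" "hd p = \<tau>" "last p = root d" "length p = Suc m" by blast
  show "Max (lev ` \<tau>) \<le> m" using walk_lev[OF p(1)] p root_Max[of d] by simp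
qed

lemma part1: "reduced d k w \<Longrightarrow> line_dist d k (WA w (root d)) (root d) = length w"
  using dist W0 Wlev by simp

lemma part2:
  assumes t: "\<tau> \<in> cells d k" and t': "\<tau>' \<in> cells d k"
  shows "\<exists>!w. reduced d k w \<and> WA w \<tau> = \<tau>'"
proof -
  have rc: "root d \<in> cells d k" by (simp add: cells_def)
  obtain u where u: "reduced d k u" "WA u (root d) = \<tau>" using R1 t by blast
  obtain u' where u': "reduced d k u'" "WA u' (root d) = \<tau>'" using R1 t' by blast
  have ou: "okc d u" "okc d u'" "okc d (winv k u)" using u u' reduced_okc winv_red by blast+
  have "WA (winv k u) \<tau> = root d"
    using WA_fp[OF rc ou(1) ou(3)] u(2) C2[of k u] by (simp add: WA_Nil)
  hence y: "WA (winv k u @ u') \<tau> = \<tau>'" using u' by (simp add: WA_append)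
  have oy: "okc d (winv k u @ u')" using ou by (auto simp: okc_def)
  have "WA (red k (winv k u @ u')) \<tau> = \<tau>'"
    unfolding red_def using WA_fp[OF t _ oy, of "[]"] y by (simp add: okc_def WA_Nil)
  moreover have "reduced d k (red k (winv k u @ u'))" using red_red[OF oy k] .
  ultimately have ex: "\<exists>w. reduced d k w \<and> WA w \<tau> = \<tau>'" by blast
  have uq: "w1 = w2" if w1: "reduced d k w1" "WA w1 \<tau> = \<tau>'" and w2: "reduced d k w2" "WA w2 \<tau> = \<tau>'" for w1 w2
  proof -
    have key: "fp k (fp k w u) (winv k u) = w" if "reduced d k w" for w
    proof -
      have "okc d w" using reduced_okc[OF that] .
      hence ow: "okc d (u @ w)" using ou(1) by (auto simp: okc_def)
      have "fp k (u @ w) (winv k u) = fp k w []" using C1[of k u] by simp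
      also have "\<dots> = w" using red_id[OF that] by (simp add: red_def)
      finally have 1: "fp k (u @ w) (winv k u) = w" .
      have "fp k (u @ w) (winv k u) = fp k (red k (u @ w)) (winv k u)"
        using assoc[OF winv_red[OF u(1)] k ow] .
      also have "red k (u @ w) = fp k w u" using red_id[OF u(1)] by (simp add: red_def)
      finally show ?thesis using 1 by simp
    qed
    have a1: "WA (fp k w1 u) (root d) = \<tau>'" using WA_fp[OF rc ou(1) reduced_okc[OF w1(1)]] u w1 by simp
    have a2: "WA (fp k w2 u) (root d) = \<tau>'" using WA_fp[OF rc ou(1) reduced_okc[OF w2(1)]] u w2 by simp
    have eq: "fp k w1 u = fp k w2 u"
      by (rule R2[OF fp_red[OF u(1) reduced_okc[OF w1(1)] k] fp_red[OF u(1) reduced_okc[OF w2(1)] k]])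
         (simp only: a1 a2)
    have "w1 = fp k (fp k w1 u) (winv k u)" using key[OF w1(1)] by simp
    also have "\<dots> = fp k (fp k w2 u) (winv k u)" by (simp only: eq)
    also have "\<dots> = w2" using key[OF w2(1)] .
    finally show ?thesis .
  qed
  show ?thesis
    apply (rule ex_ex1I[OF ex])
    using uq by blast
qed

end

theorem lemma5:
  fixes d k :: nat and \<Gamma> :: "vtx \<Rightarrow> nat"
    and \<Omega> :: "vtx set \<Rightarrow> int \<Rightarrow> vtx set \<Rightarrow> vtx set"
  assumes "1 \<le> d" and "1 \<le> k"
    and "coloring d k \<Gamma>" and "k_ordering d k \<Omega>"
  shows "(\<forall>w m. reduced d k w \<longrightarrow>
            (length w = m \<longleftrightarrow> line_dist d k (word_act k \<Gamma> \<Omega> w (root d)) (root d) = m))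
       \<and> (\<forall>\<tau>\<in>cells d k. \<forall>\<tau>'\<in>cells d k. \<exists>!w. reduced d k w \<and> word_act k \<Gamma> \<Omega> w \<tau> = \<tau>')"
proof -
  interpret L d k \<Gamma> \<Omega> using assms by unfold_locales
  show ?thesis using part1 part2 by auto
qed

end
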